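(* Let $K$ be a field of characteristic zero, let $(p_n(x))_{n\ge 0}$ be a sequence of polynomials in $K[x]$ with $\deg p_n=n$, and let $F^{(y)}:K[x]\to K[x,y]$ be a $K$-linear operator which is shift-invariant, i.e. $F^{(y)}E^{c}=E^{c}F^{(y)}$ for every $c\in K$. Then the following are equivalent: (1) for all $n\ge 0$, $F^{(y)}p_n(x)=\sum_{k=0}^{n}p_k(x)\,p_{n-k}(y)$; (2) the operator $P_x=\epsilon_y\circ F^{(y)}$ is an invertible shift-invariant operator on $K[x]$, the sequence $(p_n(x))_{n\ge0}$ is a Sheffer sequence relative to the divided power sequence $(P_x^{-1}p_n(x))_{n\ge 0}$, and $F^{(y)}=P_yE^{y}$.
   Context: For $c\in K$, $E^{c}$ denotes the shift $p(x)\mapsto p(x+c)$ (acting on the variable $x$, on $K[x]$ or on $K[x,y]$), and $E^{y}:K[x]\to K[x,y]$ is $p(x)\mapsto p(x+y)$. An operator on $K[x]$ is shift-invariant if it commutes with all $E^{c}$, $c\in K$. $\epsilon_y:K[x,y]\to K[x]$ is evaluation at $y=0$. For an operator $\phi_x$ on $K[x]$, $\phi_y$ denotes the corresponding operator on $K[y]$ obtained by renaming $x$ to $y$ (i.e. $\phi_y\circ\pi=\pi\circ\phi_x$ with $\pi:K[x]\to K[y]$ the isomorphism $x\mapsto y$), extended $K[x]$-linearly to $K[x,y]$; operators on $K[x]$ are extended $K[y]$-linearly to $K[x,y]$. A divided power sequence is a sequence of polynomials $(q_n(x))_{n\ge0}$ with $\deg q_n=n$ and $q_n(x+y)=\sum_{k=0}^n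 q_k(x)q_{n-k}(y)$ for all $n$. A sequence $(s_n(x))_{n\ge0}$ with $\deg s_n=n$ is Sheffer relative to a divided power sequence $(q_n)$ if $s_n(x+y)=\sum_{k=0}^{n}q_{n-k}(y)\,s_k(x)$ for all $n$. *)

theory Defs
  imports "HOL-Computational_Algebra.Polynomial"
begin

text \<open>K[x] is "'a poly" (variable x). K[x,y] is "'a poly poly":
  the outer variable is y, the coefficients are polynomials in x.
  So a polynomial r(x) in K[x] embeds into K[x,y] as the constant [:r:],
  and a polynomial s in K[y] (stored as "'a poly") embeds as ylift s.\<close>

definition xlift :: "'a::zero poly \<Rightarrow> 'a poly poly" where
  "xlift r = [:r:]"

definition ylift :: "'a::zero poly \<Rightarrow> 'a poly poly" where
  "ylift s = map_poly (\<lambda>c. [:c:]) s"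

definition shift :: "'a::comm_ring_1 \<Rightarrow> 'a poly \<Rightarrow> 'a poly" where
  "shift c p = pcompose p [:c, 1:]"

definition shift2 :: "'a::comm_ring_1 \<Rightarrow> 'a poly poly \<Rightarrow> 'a poly poly" where
  "shift2 c q = map_poly (shift c) q"

text \<open>E^y : K[x] \<rightarrow> K[x,y], p(x) \<mapsto> p(x+y).\<close>
definition Ey :: "'a::comm_ring_1 poly \<Rightarrow> 'a poly poly" where
  "Ey p = poly (map_poly (\<lambda>c. [:[:c:]:]) p) ([:[:0, 1:]:] + [:0, 1:])"

definition eps_y :: "'a::comm_ring_1 poly poly \<Rightarrow> 'a poly" where
  "eps_y q = poly q 0"

definition swapxy :: "'a::comm_ring_1 poly poly \<Rightarrow> 'a poly poly" where
  "swapxy q = (\<Sum>i\<le>degree q. \<Sum>j\<le>degree (coeff q i).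
                  monom (monom (coeff (coeff q i) j) i) j)"

text \<open>For an operator phi on K[x], phi_y is the same operator acting on the variable y,
  extended K[x]-linearly to K[x,y].\<close>
definition op_y :: "('a::comm_ring_1 poly \<Rightarrow> 'a poly) \<Rightarrow> 'a poly poly \<Rightarrow> 'a poly poly" where
  "op_y \<phi> q = swapxy (map_poly \<phi> (swapxy q))"

definition klinear :: "('a::comm_ring_1 poly \<Rightarrow> 'a poly) \<Rightarrow> bool" where
  "klinear f \<longleftrightarrow> (\<forall>p q. f (p + q) = f p + f q) \<and> (\<forall>c p. f (smult c p) = smult c (f p))"

definition klinear2 :: "('a::comm_ring_1 poly \<Rightarrow> 'a poly poly) \<Rightarrow> bool" where
  "klinear2 f \<longleftrightarrow> (\<forall>p q. f (p + q) = f p + f q) \<and>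
                   (\<forall>c p. f (smult c p) = smult [:c:] (f p))"

definition shift_invariant :: "('a::comm_ring_1 poly \<Rightarrow> 'a poly) \<Rightarrow> bool" where
  "shift_invariant f \<longleftrightarrow> (\<forall>c p. f (shift c p) = shift c (f p))"

definition shift_invariant2 :: "('a::comm_ring_1 poly \<Rightarrow> 'a poly poly) \<Rightarrow> bool" where
  "shift_invariant2 f \<longleftrightarrow> (\<forall>c p. f (shift c p) = shift2 c (f p))"

definition degree_seq :: "(nat \<Rightarrow> 'a::zero poly) \<Rightarrow> bool" where
  "degree_seq s \<longleftrightarrow> (\<forall>n. s n \<noteq> 0 \<and> degree (s n) = n)"

definition divided_power_seq :: "(nat \<Rightarrow> 'a::comm_ring_1 poly) \<Rightarrow> bool" where
  "divided_power_seq q \<longleftrightarrow> degree_seq q \<and>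
     (\<forall>n. Ey (q n) = (\<Sum>k\<le>n. xlift (q k) * ylift (q (n - k))))"

definition sheffer_rel :: "(nat \<Rightarrow> 'a::comm_ring_1 poly) \<Rightarrow> (nat \<Rightarrow> 'a poly) \<Rightarrow> bool" where
  "sheffer_rel q s \<longleftrightarrow> degree_seq s \<and>
     (\<forall>n. Ey (s n) = (\<Sum>k\<le>n. ylift (q (n - k)) * xlift (s k)))"

end

theory Submission
  imports Defs
begin


lemma coeff_swapxy: "coeff (coeff (swapxy q) j) i = coeff (coeff q i) j"
proof -
  have "coeff (coeff (swapxy q) j) i =
     (\<Sum>i'\<le>degree q. \<Sum>j'\<le>degree (coeff q i'). if j' = j \<and> i' = i then coeff (coeff q i') j' else 0)"
    unfolding swapxy_def coeff_sum coeff_monom by (intro sum.cong refl) auto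
  also have "\<dots> = (\<Sum>i'\<le>degree q. if i' = i then coeff (coeff q i') j else 0)"
  proof (intro sum.cong refl)
    fix i' show "(\<Sum>j'\<le>degree (coeff q i'). if j' = j \<and> i' = i then coeff (coeff q i') j' else 0) =
      (if i' = i then coeff (coeff q i') j else 0)"
      by (cases "i' = i") (auto simp: sum.delta' coeff_eq_0 not_le)
  qed
  also have "\<dots> = coeff (coeff q i) j"
    by (auto simp: sum.delta' coeff_eq_0 not_le)
  finally show ?thesis .
qed

lemma poly_eq2I: "(\<And>i j. coeff (coeff P j) i = coeff (coeff Q j) i) \<Longrightarrow> P = Q"
  by (intro poly_eqI) auto

lemma swapxy_swapxy[simp]: "swapxy (swapxy q) = q"
  by (rule poly_eq2I) (simp add: coeff_swapxy)

lemma swapxy_add: "swapxy (a + b) = swapxy a + swapxy b"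
  by (rule poly_eq2I) (simp add: coeff_swapxy)

lemma swapxy_0[simp]: "swapxy 0 = 0"
  by (rule poly_eq2I) (simp add: coeff_swapxy)

lemma swapxy_sum: "swapxy (\<Sum>k\<in>A. f k) = (\<Sum>k\<in>A. swapxy (f k))"
  by (induction A rule: infinite_finite_induct) (auto simp: swapxy_add)

lemma coeff_smult_const: "coeff (coeff (smult [:c:] P) j) i = c * coeff (coeff P j) i"
  by simp

lemma swapxy_smult: "swapxy (smult [:c:] a) = smult [:c:] (swapxy a)"
  by (rule poly_eq2I) (simp only: coeff_swapxy coeff_smult_const)

lemma coeff_xy: "coeff (coeff (xlift a * ylift b) j) i = coeff a i * coeff b j"
  by (simp add: xlift_def ylift_def coeff_map_poly mult.commute)

lemma swapxy_xy: "swapxy (xlift a * ylift b) = xlift b * ylift a"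
  by (rule poly_eq2I) (simp add: coeff_swapxy coeff_xy)

lemma coeff_X2: "coeff (coeff ([:[:0,1:]:] * (H::'a::comm_ring_1 poly poly)) j) i = (if i = 0 then 0 else coeff (coeff H j) (i - 1))"
  by (simp add: coeff_pCons coeff_smult split: nat.split)

lemma coeff_Y2: "coeff (coeff ([:0,1:] * (H::'a::comm_ring_1 poly poly)) j) i = (if j = 0 then 0 else coeff (coeff H (j - 1)) i)"
  by (simp add: coeff_pCons split: nat.split)

lemma Ey_pCons: "Ey (pCons a g) = [:[:a:]:] + ([:[:0, 1:]:] + [:0, 1:]) * Ey g"
  by (simp add: Ey_def map_poly_pCons)

lemma Ey_0[simp]: "Ey 0 = 0" by (simp add: Ey_def)

lemma swapxy_Ey: "swapxy (Ey g) = Ey g"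
proof (induction g)
  case 0 then show ?case by simp
next
  case (pCons a g)
  have "swapxy ([:[:a:]:] + ([:[:0, 1:]:] + [:0, 1:]) * Ey g) = [:[:a:]:] + ([:[:0, 1:]:] + [:0, 1:]) * Ey g"
  proof (rule poly_eq2I)
    fix i j
    show "coeff (coeff (swapxy ([:[:a:]:] + ([:[:0, 1:]:] + [:0, 1:]) * Ey g)) j) i =
          coeff (coeff ([:[:a:]:] + ([:[:0, 1:]:] + [:0, 1:]) * Ey g) j) i"
      using arg_cong[OF pCons.IH, of "\<lambda>P. coeff (coeff P _) _"]
      unfolding coeff_swapxy distrib_right coeff_add coeff_X2 coeff_Y2
      by (auto simp: coeff_pCons coeff_swapxy split: nat.split)
  qed
  then show ?case by (simp add: Ey_pCons)
qed


lemma poly_Ey_const: "poly (Ey g) [:c:] = shift c g"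
proof (induction g)
  case 0 then show ?case by (simp add: shift_def)
next
  case (pCons a g)
  then show ?case
    by (simp add: Ey_pCons shift_def pcompose_pCons algebra_simps)
qed

lemma coeff_poly_const: "coeff (poly R [:c:]) i = poly (map_poly (\<lambda>q. coeff q i) R) c"
proof (induction R)
  case 0 then show ?case by simp
next
  case (pCons a R)
  then show ?case by (simp add: map_poly_pCons)
qed

lemma eval_inj:
  fixes Q1 Q2 :: "'a::field_char_0 poly poly"
  assumes "\<And>c. poly Q1 [:c:] = poly Q2 [:c:]"
  shows "Q1 = Q2"
proof -
  define R where "R = Q1 - Q2"
  have R0: "poly R [:c:] = 0" for c using assms[of c] by (simp add: R_def)
  have mz: "map_poly (\<lambda>q. coeff q i) R = 0" for i
  proof -
    have "\<forall>c. poly (map_poly (\<lambda>q. coeff q i) R) c = 0"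
      using R0 by (metis coeff_0 coeff_poly_const)
    then show ?thesis using poly_all_0_iff_0 by blast
  qed
  then have "coeff (coeff R j) i = 0" for i j
  proof -
    have "coeff (map_poly (\<lambda>q. coeff q i) R) j = 0" using mz[of i] by simp
    then show ?thesis by (simp add: coeff_map_poly)
  qed
  then have "R = 0" by (intro poly_eq2I) simp
  then show ?thesis by (simp add: R_def)
qed

lemma poly_swapxy_const: "poly (swapxy H) [:c:] = map_poly (\<lambda>q. poly q c) H"
proof (rule poly_eqI)
  fix i
  have "map_poly (\<lambda>q. coeff q i) (swapxy H) = coeff H i"
    by (rule poly_eqI) (simp add: coeff_map_poly coeff_swapxy)
  then show "coeff (poly (swapxy H) [:c:]) i = coeff (map_poly (\<lambda>q. poly q c) H) i"
    by (simp add: coeff_poly_const coeff_map_poly)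
qed

lemma klinear_0: "klinear T \<Longrightarrow> T 0 = 0"
  unfolding klinear_def by (metis add_cancel_right_right add_0)

lemma klinear_add: "klinear T \<Longrightarrow> T (a + b) = T a + T b"
  unfolding klinear_def by blast

lemma klinear_smult: "klinear T \<Longrightarrow> T (smult c a) = smult c (T a)"
  unfolding klinear_def by blast

lemma klinear_diff: "klinear T \<Longrightarrow> T (a - b) = T a - T b"
  by (metis klinear_add diff_add_cancel add_diff_cancel)

lemma klinear_sum: "klinear T \<Longrightarrow> T (\<Sum>k\<in>A. f k) = (\<Sum>k\<in>A. T (f k))"
  by (induction A rule: infinite_finite_induct) (auto simp: klinear_0 klinear_add)

lemma klinear2_0: "klinear2 F \<Longrightarrow> F 0 = 0"
  unfolding klinear2_def by (metis add_cancel_right_right add_0)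

lemma klinear2_add: "klinear2 F \<Longrightarrow> F (a + b) = F a + F b"
  unfolding klinear2_def by blast

lemma klinear2_smult: "klinear2 F \<Longrightarrow> F (smult c a) = smult [:c:] (F a)"
  unfolding klinear2_def by blast

lemma klinear2_sum: "klinear2 F \<Longrightarrow> F (\<Sum>k\<in>A. f k) = (\<Sum>k\<in>A. F (f k))"
  by (induction A rule: infinite_finite_induct) (auto simp: klinear2_0 klinear2_add)

lemma map_poly_klinear_add: "klinear T \<Longrightarrow> map_poly T (A + B) = map_poly T A + map_poly T B"
  by (rule poly_eqI) (simp add: coeff_map_poly klinear_0 klinear_add)

lemma map_poly_klinear_0: "klinear T \<Longrightarrow> map_poly T 0 = 0"
  by simp

lemma map_poly_klinear_sum: "klinear T \<Longrightarrow> map_poly T (\<Sum>k\<in>A. f k) = (\<Sum>k\<in>A. map_poly T (f k))"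
  by (induction A rule: infinite_finite_induct) (auto simp: map_poly_klinear_add)

lemma poly_map_poly_klinear: "klinear T \<Longrightarrow> poly (map_poly T Q) [:c:] = T (poly Q [:c:])"
proof (induction Q)
  case 0 then show ?case by (simp add: klinear_0)
next
  case (pCons a Q)
  then show ?case
    by (simp add: map_poly_pCons klinear_0 klinear_add klinear_smult)
qed

lemma commute_Ey:
  fixes T :: "'a::field_char_0 poly \<Rightarrow> 'a poly"
  assumes "klinear T" "shift_invariant T"
  shows "map_poly T (Ey f) = Ey (T f)"
  by (rule eval_inj) (use assms in \<open>simp add: poly_map_poly_klinear poly_Ey_const shift_invariant_def\<close>)

lemma map_poly_xy: "klinear T \<Longrightarrow> map_poly T (xlift b * ylift a) = xlift (T b) * ylift a"
proof (rule poly_eqI)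
  fix j assume T: "klinear T"
  have "coeff (xlift b * ylift a) j = smult (coeff a j) b"
    by (simp add: xlift_def ylift_def coeff_map_poly)
  moreover have "coeff (xlift (T b) * ylift a) j = smult (coeff a j) (T b)"
    by (simp add: xlift_def ylift_def coeff_map_poly)
  ultimately show "coeff (map_poly T (xlift b * ylift a)) j = coeff (xlift (T b) * ylift a) j"
    using T by (simp add: coeff_map_poly klinear_0 klinear_smult)
qed

lemma op_y_sum: "klinear T \<Longrightarrow> op_y T (\<Sum>k\<in>A. f k) = (\<Sum>k\<in>A. op_y T (f k))"
  by (simp add: op_y_def swapxy_sum map_poly_klinear_sum)

lemma op_y_xy: "klinear T \<Longrightarrow> op_y T (xlift a * ylift b) = xlift a * ylift (T b)"
  by (simp add: op_y_def swapxy_xy map_poly_xy)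

lemma op_y_yx: "klinear T \<Longrightarrow> op_y T (ylift b * xlift a) = ylift (T b) * xlift a"
  by (metis op_y_xy mult.commute)

lemma op_y_Ey:
  fixes T :: "'a::field_char_0 poly \<Rightarrow> 'a poly"
  assumes "klinear T" "shift_invariant T"
  shows "op_y T (Ey f) = Ey (T f)"
  by (simp add: op_y_def swapxy_Ey commute_Ey[OF assms])


lemma rep:
  fixes p :: "nat \<Rightarrow> 'a::field poly"
  assumes "degree_seq p" "degree g \<le> n"
  shows "\<exists>c. g = (\<Sum>k\<le>n. smult (c k) (p k))"
  using assms(2)
proof (induction n arbitrary: g)
  case 0
  have p0: "degree (p 0) = 0" "p 0 \<noteq> 0" using assms(1) by (auto simp: degree_seq_def)
  then have c0: "coeff (p 0) 0 \<noteq> 0" by (metis degree_0_id pCons_0_0)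
  have g0: "g = [:coeff g 0:]" using 0 by (metis degree_0_id le_zero_eq)
  have pp: "p 0 = [:coeff (p 0) 0:]" using p0 by (metis degree_0_id)
  have "g = smult (coeff g 0 / coeff (p 0) 0) (p 0)"
    using c0 by (subst g0, subst pp) simp
  then show ?case by (intro exI[of _ "\<lambda>_. coeff g 0 / coeff (p 0) 0"]) simp
next
  case (Suc n)
  have pn: "degree (p (Suc n)) = Suc n" "p (Suc n) \<noteq> 0" using assms(1) by (auto simp: degree_seq_def)
  then have cn: "coeff (p (Suc n)) (Suc n) \<noteq> 0" by (metis leading_coeff_0_iff)
  define d where "d = coeff g (Suc n) / coeff (p (Suc n)) (Suc n)"
  define g' where "g' = g - smult d (p (Suc n))"
  have "degree g' \<le> Suc n" unfolding g'_def using Suc.prems pn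
    by (metis degree_diff_le degree_smult_le order.trans)
  moreover have "coeff g' (Suc n) = 0" using cn by (simp add: g'_def d_def)
  ultimately have "degree g' \<le> n"
  proof (intro degree_le allI impI)
    fix i assume "degree g' \<le> Suc n" "coeff g' (Suc n) = 0" "n < i"
    then show "coeff g' i = 0"
      by (cases "i = Suc n") (auto intro: coeff_eq_0)
  qed
  then obtain c where c: "g' = (\<Sum>k\<le>n. smult (c k) (p k))" using Suc.IH by blast
  define c' where "c' = c(Suc n := d)"
  have "g = g' + smult d (p (Suc n))" by (simp add: g'_def)
  also have "\<dots> = (\<Sum>k\<le>n. smult (c' k) (p k)) + smult (c' (Suc n)) (p (Suc n))"
    unfolding c by (simp add: c'_def)
  also have "\<dots> = (\<Sum>k\<le>Suc n. smult (c' k) (p k))" by (simp only: sum.atMost_Suc)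
  finally show ?case by blast
qed

lemma eps_y_add: "eps_y (a + b) = eps_y a + eps_y b"
  by (simp add: eps_y_def)

lemma eps_y_sum: "eps_y (\<Sum>k\<in>A. f k) = (\<Sum>k\<in>A. eps_y (f k))"
  by (simp add: eps_y_def poly_sum)

lemma eps_y_smult: "eps_y (smult [:c:] H) = smult c (eps_y H)"
  by (simp add: eps_y_def)

lemma eps_y_shift2: "eps_y (shift2 c H) = shift c (eps_y H)"
  by (simp add: eps_y_def shift2_def poly_0_coeff_0 coeff_map_poly shift_def)

lemma eps_y_xy: "eps_y (xlift a * ylift b) = smult (poly b 0) a"
  by (simp add: eps_y_def xlift_def ylift_def poly_0_coeff_0 coeff_map_poly)

lemma FE_from_sym:
  fixes F :: "'a::field_char_0 poly \<Rightarrow> 'a poly poly"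
  assumes "shift_invariant2 F" "\<And>g. swapxy (F g) = F g"
    and "shift_invariant (eps_y \<circ> F)"
  shows "F f = Ey (eps_y (F f))"
proof (rule eval_inj)
  fix c :: 'a
  have sh: "(\<lambda>q. poly q 0) \<circ> shift c = (\<lambda>q. poly q c)"
    by (auto simp: shift_def poly_pcompose)
  have "poly (F f) [:c:] = poly (swapxy (F f)) [:c:]" using assms(2) by simp
  also have "\<dots> = map_poly (\<lambda>q. poly q c) (F f)" by (rule poly_swapxy_const)
  also have "\<dots> = map_poly (\<lambda>q. poly q 0) (map_poly (shift c) (F f))"
    by (subst map_poly_map_poly) (auto simp: shift_def sh)
  also have "\<dots> = map_poly (\<lambda>q. poly q 0) (F (shift c f))"
    using assms(1) by (simp add: shift_invariant2_def shift2_def)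
  also have "\<dots> = poly (swapxy (F (shift c f))) [:0:]" by (rule poly_swapxy_const[symmetric])
  also have "\<dots> = eps_y (F (shift c f))" using assms(2) by (simp add: eps_y_def)
  also have "\<dots> = shift c (eps_y (F f))" using assms(3) by (simp add: shift_invariant_def)
  also have "\<dots> = poly (Ey (eps_y (F f))) [:c:]" by (simp add: poly_Ey_const)
  finally show "poly (F f) [:c:] = poly (Ey (eps_y (F f))) [:c:]" .
qed

lemma sum_rev_atMost: "(\<Sum>k\<le>n. f k (n - k)) = (\<Sum>k\<le>n. f (n - k) (k::nat))"
  by (rule sum.reindex_bij_witness[where i="\<lambda>k. n - k" and j="\<lambda>k. n - k"]) auto


lemma dir2:
  fixes p :: "nat \<Rightarrow> 'a::field_char_0 poly" and P :: "'a poly \<Rightarrow> 'a poly"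
  assumes "klinear P" "bij P" "sheffer_rel (\<lambda>n. inv P (p n)) p" "\<forall>r. F r = op_y P (Ey r)"
  shows "F (p n) = (\<Sum>k\<le>n. xlift (p k) * ylift (p (n - k)))"
proof -
  have PQ: "P (inv P y) = y" for y using assms(2) by (simp add: bij_is_surj surj_f_inv_f)
  have "F (p n) = op_y P (Ey (p n))" using assms(4) by simp
  also have "\<dots> = op_y P (\<Sum>k\<le>n. ylift (inv P (p (n - k))) * xlift (p k))"
    using assms(3) by (simp add: sheffer_rel_def)
  also have "\<dots> = (\<Sum>k\<le>n. ylift (P (inv P (p (n - k)))) * xlift (p k))"
    by (simp add: op_y_sum[OF assms(1)] op_y_yx[OF assms(1)])
  also have "\<dots> = (\<Sum>k\<le>n. xlift (p k) * ylift (p (n - k)))"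
    by (simp add: PQ mult.commute)
  finally show ?thesis .
qed


lemma dir1:
  fixes p :: "nat \<Rightarrow> 'a::field_char_0 poly" and F :: "'a poly \<Rightarrow> 'a poly poly"
  assumes P_def: "P = eps_y \<circ> F"
    and dp: "degree_seq p" and lF: "klinear2 F" and sF: "shift_invariant2 F"
    and H1: "\<forall>n. F (p n) = (\<Sum>k\<le>n. xlift (p k) * ylift (p (n - k)))"
  shows "klinear P \<and> shift_invariant P \<and> bij P \<and>
      divided_power_seq (\<lambda>n. inv P (p n)) \<and>
      sheffer_rel (\<lambda>n. inv P (p n)) p \<and>
      (\<forall>r. F r = op_y P (Ey r))"
proof -
  have linP: "klinear P" using lF
    by (simp add: P_def klinear_def klinear2_def eps_y_add eps_y_smult)
  have shP: "shift_invariant P" using sF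
    by (simp add: P_def shift_invariant_def shift_invariant2_def eps_y_shift2)
  have Ppn: "P (p n) = (\<Sum>k\<le>n. smult (poly (p (n - k)) 0) (p k))" for n
    using H1 by (simp add: P_def eps_y_sum eps_y_xy)
  define a where "a = poly (p 0) 0"
  have degp: "degree (p n) = n" "p n \<noteq> 0" for n using dp by (auto simp: degree_seq_def)
  have a0: "a \<noteq> 0"
  proof -
    have "p 0 = [:coeff (p 0) 0:]" using degp(1)[of 0] by (metis degree_0_id)
    then show ?thesis using degp(2)[of 0] unfolding a_def by (metis pCons_0_0 poly_0_coeff_0)
  qed
  have coeffPp: "coeff (P (p k)) m = a * coeff (p k) m" if "k \<le> m" for k m
  proof -
    have "coeff (P (p k)) m = (\<Sum>j\<le>k. poly (p (k - j)) 0 * coeff (p j) m)"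
      by (simp add: Ppn coeff_sum)
    also have "\<dots> = (\<Sum>j<k. poly (p (k - j)) 0 * coeff (p j) m) + a * coeff (p k) m"
      by (simp add: lessThan_Suc_atMost[symmetric] a_def)
    also have "(\<Sum>j<k. poly (p (k - j)) 0 * coeff (p j) m) = 0"
      using that by (intro sum.neutral) (auto intro!: coeff_eq_0 simp: degp)
    finally show ?thesis by simp
  qed
  have coeffPg: "coeff (P g) m = a * coeff g m" if "degree g \<le> m" for g m
  proof -
    obtain c where c: "g = (\<Sum>k\<le>degree g. smult (c k) (p k))" using rep[OF dp, of g "degree g"] by auto
    have "P g = (\<Sum>k\<le>degree g. smult (c k) (P (p k)))"
      by (subst c) (simp add: klinear_sum[OF linP] klinear_smult[OF linP])
    then have "coeff (P g) m = (\<Sum>k\<le>degree g. c k * (a * coeff (p k) m))"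
      using that by (simp add: coeff_sum coeffPp)
    also have "\<dots> = a * (\<Sum>k\<le>degree g. c k * coeff (p k) m)"
      by (simp add: sum_distrib_left algebra_simps)
    also have "(\<Sum>k\<le>degree g. c k * coeff (p k) m) = coeff g m"
      by (subst (2) c) (simp add: coeff_sum)
    finally show ?thesis .
  qed
  have degP: "degree (P g) = degree g" for g
  proof (cases "g = 0")
    case True then show ?thesis by (simp add: klinear_0[OF linP])
  next
    case False
    have "degree (P g) \<le> degree g"
      by (intro degree_le allI impI) (simp add: coeffPg coeff_eq_0)
    moreover have "coeff (P g) (degree g) \<noteq> 0" using False a0 coeffPg[of g "degree g"] by simp
    ultimately show ?thesis by (simp add: le_antisym le_degree)
  qed
  have P0: "P g = 0 \<Longrightarrow> g = 0" for g
  proof (rule ccontr)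
    assume "P g = 0" "g \<noteq> 0"
    then have "coeff (P g) (degree g) \<noteq> 0" using a0 coeffPg[of g "degree g"] by simp
    then show False using \<open>P g = 0\<close> by simp
  qed
  have injP: "inj P"
  proof (rule injI)
    fix x y assume "P x = P y"
    then have "P (x - y) = 0" by (simp add: klinear_diff[OF linP])
    then show "x = y" using P0 by fastforce
  qed
  have hp: "\<exists>h. P h = p n" for n
  proof (induction n rule: less_induct)
    case (less n)
    then obtain h where h: "\<And>k. k < n \<Longrightarrow> P (h k) = p k" by metis
    define b where "b k = poly (p (n - k)) 0" for k
    have "P (p n) = (\<Sum>k<n. smult (b k) (p k)) + smult a (p n)"
      by (simp add: Ppn lessThan_Suc_atMost[symmetric] a_def b_def)
    also have "(\<Sum>k<n. smult (b k) (p k)) = P (\<Sum>k<n. smult (b k) (h k))"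
      by (simp add: klinear_sum[OF linP] klinear_smult[OF linP] h)
    finally have "smult a (p n) = P (p n - (\<Sum>k<n. smult (b k) (h k)))"
      by (simp add: klinear_diff[OF linP])
    then have "p n = P (smult (inverse a) (p n - (\<Sum>k<n. smult (b k) (h k))))"
      using a0 by (simp add: klinear_smult[OF linP] flip: \<open>smult a (p n) = _\<close>)
    then show ?case by metis
  qed
  then obtain h where h: "\<And>k. P (h k) = p k" by metis
  have surjP: "surj P"
  proof -
    have "g \<in> range P" for g
    proof -
      obtain c where c: "g = (\<Sum>k\<le>degree g. smult (c k) (p k))" using rep[OF dp, of g "degree g"] by auto
      have "P (\<Sum>k\<le>degree g. smult (c k) (h k)) = g"
        by (subst c) (simp add: klinear_sum[OF linP] klinear_smult[OF linP] h)
      then show ?thesis by (metis rangeI)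
    qed
    then show ?thesis by blast
  qed
  have bijP: "bij P" using injP surjP by (simp add: bij_def)
  define Q where "Q = inv P"
  have PQ: "P (Q y) = y" for y by (simp add: Q_def surjP surj_f_inv_f)
  have QP: "Q (P y) = y" for y by (simp add: Q_def injP)
  have linQ: "klinear Q" unfolding klinear_def
    by (metis PQ QP klinear_add[OF linP] klinear_smult[OF linP])
  have shQ: "shift_invariant Q" unfolding shift_invariant_def
    by (metis PQ QP shP shift_invariant_def)
  have symp: "swapxy (F (p n)) = F (p n)" for n
  proof -
    have "swapxy (F (p n)) = (\<Sum>k\<le>n. xlift (p (n - k)) * ylift (p k))"
      by (simp add: H1 swapxy_sum swapxy_xy)
    also have "\<dots> = (\<Sum>k\<le>n. xlift (p k) * ylift (p (n - k)))"
      using sum_rev_atMost[of "\<lambda>i j. xlift (p j) * ylift (p i)" n] by simp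
    finally show ?thesis by (simp add: H1)
  qed
  have sym: "swapxy (F g) = F g" for g
  proof -
    obtain c where c: "g = (\<Sum>k\<le>degree g. smult (c k) (p k))" using rep[OF dp, of g "degree g"] by auto
    have "F g = (\<Sum>k\<le>degree g. smult [:c k:] (F (p k)))"
      by (subst c) (simp add: klinear2_sum[OF lF] klinear2_smult[OF lF])
    then show ?thesis by (simp add: swapxy_sum swapxy_smult symp)
  qed
  have FE: "F f = Ey (P f)" for f
    using FE_from_sym[OF sF sym] shP by (simp add: P_def)
  have lastc: "\<forall>r. F r = op_y P (Ey r)" by (simp add: FE op_y_Ey[OF linP shP])
  have shef: "Ey (p n) = (\<Sum>k\<le>n. ylift (Q (p (n - k))) * xlift (p k))" for n
  proof -
    have "Ey (p n) = Ey (Q (P (p n)))" by (simp add: QP)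
    also have "\<dots> = op_y Q (F (p n))" by (simp add: FE op_y_Ey[OF linQ shQ])
    also have "\<dots> = (\<Sum>k\<le>n. xlift (p k) * ylift (Q (p (n - k))))"
      by (simp add: H1 op_y_sum[OF linQ] op_y_xy[OF linQ])
    finally show ?thesis by (simp add: mult.commute)
  qed
  have degQ: "degree_seq (\<lambda>n. Q (p n))"
    unfolding degree_seq_def
  proof (intro allI conjI)
    fix n
    show "Q (p n) \<noteq> 0" using degp(2)[of n] PQ[of "p n"] klinear_0[OF linP] by force
    show "degree (Q (p n)) = n" using degP[of "Q (p n)"] PQ degp by simp
  qed
  have dps: "Ey (Q (p n)) = (\<Sum>k\<le>n. xlift (Q (p k)) * ylift (Q (p (n - k))))" for n
  proof -
    have "Ey (Q (p n)) = map_poly Q (Ey (p n))" by (simp add: commute_Ey[OF linQ shQ])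
    also have "\<dots> = map_poly Q (\<Sum>k\<le>n. xlift (p k) * ylift (Q (p (n - k))))"
      by (simp add: shef mult.commute)
    also have "\<dots> = (\<Sum>k\<le>n. xlift (Q (p k)) * ylift (Q (p (n - k))))"
      by (simp add: map_poly_klinear_sum[OF linQ] map_poly_xy[OF linQ])
    finally show ?thesis .
  qed
  show ?thesis
    using linP shP bijP degQ dps shef lastc dp
    by (simp add: divided_power_seq_def sheffer_rel_def Q_def)
qed


theorem theorem1:
  fixes p :: "nat \<Rightarrow> 'a::field_char_0 poly"
    and F :: "'a poly \<Rightarrow> 'a poly poly"
  assumes "degree_seq p"
    and "klinear2 F"
    and "shift_invariant2 F"
  shows "(\<forall>n. F (p n) = (\<Sum>k\<le>n. xlift (p k) * ylift (p (n - k))))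
     \<longleftrightarrow>
     (klinear (eps_y \<circ> F) \<and> shift_invariant (eps_y \<circ> F) \<and> bij (eps_y \<circ> F) \<and>
      divided_power_seq (\<lambda>n. inv (eps_y \<circ> F) (p n)) \<and>
      sheffer_rel (\<lambda>n. inv (eps_y \<circ> F) (p n)) p \<and>
      (\<forall>r. F r = op_y (eps_y \<circ> F) (Ey r)))"
  proof
  assume H: "\<forall>n. F (p n) = (\<Sum>k\<le>n. xlift (p k) * ylift (p (n - k)))"
  show "klinear (eps_y \<circ> F) \<and> shift_invariant (eps_y \<circ> F) \<and> bij (eps_y \<circ> F) \<and>
      divided_power_seq (\<lambda>n. inv (eps_y \<circ> F) (p n)) \<and>
      sheffer_rel (\<lambda>n. inv (eps_y \<circ> F) (p n)) p \<and>
      (\<forall>r. F r = op_y (eps_y \<circ> F) (Ey r))"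
    by (rule dir1[OF refl assms H])
next
  assume "klinear (eps_y \<circ> F) \<and> shift_invariant (eps_y \<circ> F) \<and> bij (eps_y \<circ> F) \<and>
      divided_power_seq (\<lambda>n. inv (eps_y \<circ> F) (p n)) \<and>
      sheffer_rel (\<lambda>n. inv (eps_y \<circ> F) (p n)) p \<and>
      (\<forall>r. F r = op_y (eps_y \<circ> F) (Ey r))"
  then show "\<forall>n. F (p n) = (\<Sum>k\<le>n. xlift (p k) * ylift (p (n - k)))"
    using dir2[of "eps_y \<circ> F" p F] by blast
qed

end
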